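(* Consider the semi-discrete finite volume scheme with Lax–Friedrichs flux for the multicomponent compressible Euler system described in the context. Assume $\rho_{i,K}(0)>0$ for all $K\in\mathcal{T}_h$, $i=1,\dots,\mathrm{n}$, that $\mathbf{u}_h=\mathbf{m}_h/\rho_h\in L^2(0,T;L^\infty(\Omega))$, and additionally that the initial specific entropy satisfies $s_K(0)\ge Z_*$ for all $K\in\mathcal{T}_h$, for some $Z_*\in\mathbb{R}$. Then \[ \mathbb{T}_K(t)>0\quad\text{and}\quad p_K(t)>0\qquad\text{for all }K\in\mathcal{T}_h,\ t\in[0,T]. \]
   Context: Domain: $\Omega=([0,1]|_{\{0,1\}})^N$, $N\in\{1,2,3\}$ (flat torus, periodic). Multicomponent Euler system for $\mathrm{n}$ species: unknowns partial densities $\rho_i$, momentum $\mathbf{m}=\rho\mathbf{u}$, total energy $\mathcal{E}$, with $\rho=\sum_{i}\rho_i$: $\partial_t\rho_i+\nabla\cdot(\rho_i\mathbf{u})=0$, $\partial_t\mathbf{m}+\nabla\cdot(\rho\mathbf{u}\otimes\mathbf{u}+p\mathbb{I})=0$, $\partial_t\mathcal{E}+\nabla\cdot((\mathcal{E}+p)\mathbf{u})=0$. Write $\mathbf{U}=(\rho_1,\dots,\rho_{\mathrm{n}},\mathbf{m},\mathcal{E})$ and $\mathbf{f}(\mathbf{U})$ the corresponding flux. Closure: $p=\sum_i\rho_i r_i\mathbb{T}$ with constants $r_i>0$, $\mathcal{E}=\sum_i\rho_i(e_{0i}+c_{vi}\mathbb{T})+\frac12\rho|\mathbf{u}|^2$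 with constants $e_{0i}$, $c_{vi}>0$, $c_{pi}=c_{vi}+r_i$. Mathematical entropy $\eta=-\rho s$, with specific entropy $s=\frac1\rho\sum_i\rho_i(c_{vi}\ln\mathbb{T}-r_i\ln\rho_i)$; entropy flux $-\rho s\mathbf{u}$. Scheme: uniform Cartesian mesh $\mathcal{T}_h$ with mesh size $h$, cells $K$ ($|K|=h^N$), interfaces $S_{KL}$ ($|S_{KL}|=h^{N-1}$), unit normals $\mathbf{n}_{KL}$ from $K$ to $L$, neighbours $\mathcal{N}(K)$. Piecewise constant $\mathbf{U}_h(t)$ with values $\mathbf{U}_K(t)$, initial values given by cell averages, and $|K|\frac{d}{dt}\mathbf{U}_K+\sum_{L\in\mathcal{N}(K)}|S_{KL}|\mathbf{F}_{KL}=0$, $\mathbf{F}_{KL}=\frac{\mathbf{f}(\mathbf{U}_K)+\mathbf{f}(\mathbf{U}_L)}{2}\cdot\mathbf{n}_{KL}-\frac{\lambda_{KL}}{2}(\mathbf{U}_L-\mathbf{U}_K)$, $\lambda_{KL}=\max(|\mathbf{u}_K|+c_{\rm mix}(\mathbf{U}_K),|\mathbf{u}_L|+c_{\rm mix}(\mathbf{U}_L))$, $c_{\rm mix}^2=\gamma_{\rm mix}p/\rho$, $\gamma_{\rm mix}=\sum_i\rho_ic_{pi}/\sum_i\rho_ic_{vi}$. Discrete thermodynamic quantities: $\mathbb{T}_K=\dfrac{\mathcal{E}_K-\big(\frac12|\mathbf{m}_K|^2/\rho_K+\sum_i\rho_{i,K}e_{0i}\big)}{\sum_i\rho_{i,K}c_{vi}}$,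 $s_K=\frac{1}{\rho_K}\sum_i\rho_{i,K}(c_{vi}\ln\mathbb{T}_K-r_i\ln\rho_{i,K})$, $p_K=\sum_i\rho_{i,K}r_i\mathbb{T}_K$. *)

theory Defs
  imports "HOL-Analysis.Analysis"
begin

text \<open>Components of the conservative state vector
  U = (rho_1,...,rho_n, m_1,...,m_N, E).\<close>
datatype comp = Rho nat | Mom nat | En

definition comps :: "nat \<Rightarrow> nat \<Rightarrow> comp set" where
  "comps ns N = {Rho i | i. i < ns} \<union> {Mom d | d. d < N} \<union> {En}"

text \<open>Cells of the uniform periodic Cartesian mesh with M cells per direction
  (mesh size h = 1/M) on the N-dimensional flat torus; a cell is a multi-index.\<close>
definition cells :: "nat \<Rightarrow> nat \<Rightarrow> (nat \<Rightarrow> nat) set" where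
  "cells N M = {K. (\<forall>d<N. K d < M) \<and> (\<forall>d. N \<le> d \<longrightarrow> K d = 0)}"

definition mesh_h :: "nat \<Rightarrow> real" where
  "mesh_h M = 1 / real M"

definition nbr :: "nat \<Rightarrow> (nat \<Rightarrow> nat) \<Rightarrow> nat \<Rightarrow> bool \<Rightarrow> (nat \<Rightarrow> nat)" where
  "nbr M K d \<sigma> = K(d := (if \<sigma> then (K d + 1) mod M else (K d + M - 1) mod M))"

definition side_sign :: "bool \<Rightarrow> real" where
  "side_sign \<sigma> = (if \<sigma> then 1 else -1)"

definition dens :: "nat \<Rightarrow> (comp \<Rightarrow> real) \<Rightarrow> real" where
  "dens ns U = (\<Sum>i<ns. U (Rho i))"

definition vel :: "nat \<Rightarrow> (comp \<Rightarrow> real) \<Rightarrow> nat \<Rightarrow> real" where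
  "vel ns U d = U (Mom d) / dens ns U"

definition vnorm :: "nat \<Rightarrow> nat \<Rightarrow> (comp \<Rightarrow> real) \<Rightarrow> real" where
  "vnorm ns N U = sqrt (\<Sum>d<N. (vel ns U d)\<^sup>2)"

definition temp :: "nat \<Rightarrow> (nat \<Rightarrow> real) \<Rightarrow> (nat \<Rightarrow> real) \<Rightarrow> nat \<Rightarrow> (comp \<Rightarrow> real) \<Rightarrow> real" where
  "temp ns e0 cv N U =
     (U En - ((1/2) * (\<Sum>d<N. (U (Mom d))\<^sup>2) / dens ns U + (\<Sum>i<ns. U (Rho i) * e0 i)))
     / (\<Sum>i<ns. U (Rho i) * cv i)"

definition pres :: "nat \<Rightarrow> (nat \<Rightarrow> real) \<Rightarrow> (nat \<Rightarrow> real) \<Rightarrow> (nat \<Rightarrow> real) \<Rightarrow> nat \<Rightarrow> (comp \<Rightarrow> real) \<Rightarrow> real" where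
  "pres ns r e0 cv N U = (\<Sum>i<ns. U (Rho i) * r i) * temp ns e0 cv N U"

definition spec_entropy :: "nat \<Rightarrow> (nat \<Rightarrow> real) \<Rightarrow> (nat \<Rightarrow> real) \<Rightarrow> (nat \<Rightarrow> real) \<Rightarrow> nat \<Rightarrow> (comp \<Rightarrow> real) \<Rightarrow> real" where
  "spec_entropy ns r e0 cv N U =
     (1 / dens ns U) * (\<Sum>i<ns. U (Rho i) * (cv i * ln (temp ns e0 cv N U) - r i * ln (U (Rho i))))"

definition gamma_mix :: "nat \<Rightarrow> (nat \<Rightarrow> real) \<Rightarrow> (nat \<Rightarrow> real) \<Rightarrow> (comp \<Rightarrow> real) \<Rightarrow> real" where
  "gamma_mix ns r cv U = (\<Sum>i<ns. U (Rho i) * (cv i + r i)) / (\<Sum>i<ns. U (Rho i) * cv i)"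

definition c_mix :: "nat \<Rightarrow> (nat \<Rightarrow> real) \<Rightarrow> (nat \<Rightarrow> real) \<Rightarrow> (nat \<Rightarrow> real) \<Rightarrow> nat \<Rightarrow> (comp \<Rightarrow> real) \<Rightarrow> real" where
  "c_mix ns r e0 cv N U = sqrt (gamma_mix ns r cv U * pres ns r e0 cv N U / dens ns U)"

definition phys_flux :: "nat \<Rightarrow> (nat \<Rightarrow> real) \<Rightarrow> (nat \<Rightarrow> real) \<Rightarrow> (nat \<Rightarrow> real) \<Rightarrow> nat \<Rightarrow> nat \<Rightarrow> (comp \<Rightarrow> real) \<Rightarrow> comp \<Rightarrow> real" where
  "phys_flux ns r e0 cv N d U c =
     (case c of
        Rho i \<Rightarrow> U (Rho i) * vel ns U d
      | Mom j \<Rightarrow> U (Mom j) * vel ns U d + (if j = d then pres ns r e0 cv N U else 0)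
      | En \<Rightarrow> (U En + pres ns r e0 cv N U) * vel ns U d)"

text \<open>Lax--Friedrichs numerical flux F_KL with normal n_KL = side_sign sigma * e_d.\<close>
definition lf_flux :: "nat \<Rightarrow> (nat \<Rightarrow> real) \<Rightarrow> (nat \<Rightarrow> real) \<Rightarrow> (nat \<Rightarrow> real) \<Rightarrow> nat \<Rightarrow> nat \<Rightarrow> bool
     \<Rightarrow> (comp \<Rightarrow> real) \<Rightarrow> (comp \<Rightarrow> real) \<Rightarrow> comp \<Rightarrow> real" where
  "lf_flux ns r e0 cv N d \<sigma> UK UL c =
     (let lam = max (vnorm ns N UK + c_mix ns r e0 cv N UK) (vnorm ns N UL + c_mix ns r e0 cv N UL)
      in (phys_flux ns r e0 cv N d UK c + phys_flux ns r e0 cv N d UL c) / 2 * side_sign \<sigma>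
         - lam / 2 * (UL c - UK c))"

text \<open>Right-hand side of the semi-discrete scheme:
  dU_K/dt = -(1/|K|) sum_{L in N(K)} |S_KL| F_KL, with |K| = h^N, |S_KL| = h^(N-1).\<close>
definition fv_rhs :: "nat \<Rightarrow> (nat \<Rightarrow> real) \<Rightarrow> (nat \<Rightarrow> real) \<Rightarrow> (nat \<Rightarrow> real) \<Rightarrow> nat \<Rightarrow> nat
     \<Rightarrow> ((nat \<Rightarrow> nat) \<Rightarrow> comp \<Rightarrow> real) \<Rightarrow> (nat \<Rightarrow> nat) \<Rightarrow> comp \<Rightarrow> real" where
  "fv_rhs ns r e0 cv N M U K c =
     - (1 / mesh_h M ^ N) *
       (\<Sum>d<N. \<Sum>\<sigma>\<in>{True, False}.
          mesh_h M ^ (N - 1) * lf_flux ns r e0 cv N d \<sigma> (U K) (U (nbr M K d \<sigma>)) c)"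

end

theory Submission
  imports Defs
begin


lemma nbr_cells:
  assumes "K \<in> cells N M" "d < N" "1 \<le> M"
  shows "nbr M K d \<sigma> \<in> cells N M"
  using assms unfolding cells_def nbr_def by auto

lemma mesh_factor:
  assumes "1 \<le> N" "1 \<le> M"
  shows "(1 / mesh_h M ^ N) * mesh_h M ^ (N - 1) = real M"
proof -
  obtain k where k: "N = Suc k" using assms by (cases N) auto
  show ?thesis using assms unfolding k mesh_h_def by (simp add: power_divide)
qed

lemma vel_le_vnorm:
  assumes "d < N"
  shows "\<bar>vel ns U d\<bar> \<le> vnorm ns N U"
proof -
  have "(vel ns U d)\<^sup>2 \<le> (\<Sum>d<N. (vel ns U d)\<^sup>2)"
    using assms by (intro member_le_sum) auto
  then have "sqrt ((vel ns U d)\<^sup>2) \<le> sqrt (\<Sum>d<N. (vel ns U d)\<^sup>2)"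
    by (rule real_sqrt_le_mono)
  then show ?thesis unfolding vnorm_def by simp
qed

lemma vnorm_nonneg: "0 \<le> vnorm ns N U"
  unfolding vnorm_def by (simp add: sum_nonneg)

lemma lf_rho_pair:
  fixes a b1 b0 x1 x0 lam1 lam0 um wK :: real
  assumes "0 \<le> a" "a \<le> b1" "a \<le> b0" "lam1 \<ge> \<bar>x1\<bar>" "lam0 \<ge> \<bar>x0\<bar>" "\<bar>x1\<bar> \<le> um" "\<bar>x0\<bar> \<le> um"
  shows "((a*wK + b1*x1)/2 * 1 - lam1/2*(b1 - a)) + ((a*wK + b0*x0)/2*(-1) - lam0/2*(b0-a)) \<le> um * a"
proof -
  have 1: "lam1*(b1-a) \<ge> \<bar>x1\<bar>*(b1-a)" using assms by (intro mult_right_mono) auto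
  have 2: "lam0*(b0-a) \<ge> \<bar>x0\<bar>*(b0-a)" using assms by (intro mult_right_mono) auto
  have 3: "b1*x1 \<le> b1*\<bar>x1\<bar>" using assms by (auto intro: mult_left_mono)
  have "b0*(-x0) \<le> b0*\<bar>x0\<bar>" using assms by (intro mult_left_mono) auto
  then have 5: "-(b0*x0) \<le> b0*\<bar>x0\<bar>" by simp
  have 4: "\<bar>x1\<bar>*a \<le> um*a" "\<bar>x0\<bar>*a \<le> um*a" using assms by (auto intro: mult_right_mono)
  have "(b1*x1 - b0*x0) - lam1*(b1-a) - lam0*(b0-a) \<le> 2*(um*a)"
    using 1 2 3 4 5 by (simp add: algebra_simps)
  then show ?thesis by (simp add: field_simps)
qed

definition lamKL where
  "lamKL ns r e0 cv N UK UL = max (vnorm ns N UK + c_mix ns r e0 cv N UK) (vnorm ns N UL + c_mix ns r e0 cv N UL)"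

lemma lf_unfold:
  "lf_flux ns r e0 cv N d \<sigma> UK UL c =
     (phys_flux ns r e0 cv N d UK c + phys_flux ns r e0 cv N d UL c) / 2 * side_sign \<sigma>
         - lamKL ns r e0 cv N UK UL / 2 * (UL c - UK c)"
  unfolding lf_flux_def lamKL_def Let_def by simp

lemma lam_ge_vel:
  assumes "c_mix ns r e0 cv N UL \<ge> 0" "d < N"
  shows "lamKL ns r e0 cv N UK UL \<ge> \<bar>vel ns UL d\<bar>"
  using vel_le_vnorm[OF assms(2), of ns UL] assms(1) unfolding lamKL_def by linarith

lemma rhs_split:
  assumes "1 \<le> N" "1 \<le> M"
  shows "fv_rhs ns r e0 cv N M V K c = - real M * (\<Sum>d<N.
     lf_flux ns r e0 cv N d True (V K) (V (nbr M K d True)) c +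
     lf_flux ns r e0 cv N d False (V K) (V (nbr M K d False)) c)"
proof -
  let ?h = "mesh_h M"
  have "(\<Sum>d<N. \<Sum>\<sigma>\<in>{True, False}. ?h ^ (N - 1) * lf_flux ns r e0 cv N d \<sigma> (V K) (V (nbr M K d \<sigma>)) c)
     = ?h ^ (N - 1) * (\<Sum>d<N. lf_flux ns r e0 cv N d True (V K) (V (nbr M K d True)) c +
     lf_flux ns r e0 cv N d False (V K) (V (nbr M K d False)) c)"
    by (simp add: sum_distrib_left distrib_left)
  then show ?thesis unfolding fv_rhs_def
    using mesh_factor[OF assms] by (simp add: mult.assoc[symmetric])
qed

lemma rho_rhs_ge:
  assumes N1: "1 \<le> N" and M1: "1 \<le> M" and K: "K \<in> cells N M"
    and mn: "\<forall>L\<in>cells N M. 0 \<le> V K (Rho i) \<and> V K (Rho i) \<le> V L (Rho i)"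
    and cpos: "\<forall>L\<in>cells N M. c_mix ns r e0 cv N (V L) \<ge> 0"
    and um: "\<forall>L\<in>cells N M. vnorm ns N (V L) \<le> um"
  shows "fv_rhs ns r e0 cv N M V K (Rho i) \<ge> -(real M * real N * um) * V K (Rho i)"
proof -
  have each: "lf_flux ns r e0 cv N d True (V K) (V (nbr M K d True)) (Rho i) +
     lf_flux ns r e0 cv N d False (V K) (V (nbr M K d False)) (Rho i) \<le> um * V K (Rho i)"
    if d: "d < N" for d
  proof -
    let ?L1 = "nbr M K d True" and ?L0 = "nbr M K d False"
    have L1: "?L1 \<in> cells N M" and L0: "?L0 \<in> cells N M" using nbr_cells K d M1 by auto
    have u1: "\<bar>vel ns (V ?L1) d\<bar> \<le> um" using um L1 vel_le_vnorm[OF d, of ns "V ?L1"] by auto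
    have u0: "\<bar>vel ns (V ?L0) d\<bar> \<le> um" using um L0 vel_le_vnorm[OF d, of ns "V ?L0"] by auto
    show ?thesis unfolding lf_unfold phys_flux_def side_sign_def
      apply simp
      apply (rule lf_rho_pair[simplified])
      using mn L1 L0 lam_ge_vel[OF _ d] cpos u1 u0 by auto
  qed
  have "(\<Sum>d<N. lf_flux ns r e0 cv N d True (V K) (V (nbr M K d True)) (Rho i) +
     lf_flux ns r e0 cv N d False (V K) (V (nbr M K d False)) (Rho i)) \<le> (\<Sum>d<N. um * V K (Rho i))"
    by (rule sum_mono) (use each in auto)
  then have "(\<Sum>d<N. lf_flux ns r e0 cv N d True (V K) (V (nbr M K d True)) (Rho i) +
     lf_flux ns r e0 cv N d False (V K) (V (nbr M K d False)) (Rho i)) \<le> real N * (um * V K (Rho i))"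
    by simp
  then have "real M * (\<Sum>d<N. lf_flux ns r e0 cv N d True (V K) (V (nbr M K d True)) (Rho i) +
     lf_flux ns r e0 cv N d False (V K) (V (nbr M K d False)) (Rho i)) \<le> real M * (real N * (um * V K (Rho i)))"
    by (rule mult_left_mono) simp
  then show ?thesis unfolding rhs_split[OF N1 M1] by (simp add: algebra_simps)
qed

definition gth :: "nat \<Rightarrow> (nat \<Rightarrow> real) \<Rightarrow> nat \<Rightarrow> (comp \<Rightarrow> real) \<Rightarrow> real" where
  "gth ns e0 N V = V En - ((1/2) * (\<Sum>d<N. (V (Mom d))\<^sup>2) / dens ns V + (\<Sum>i<ns. V (Rho i) * e0 i))"

definition ell :: "nat \<Rightarrow> (nat \<Rightarrow> real) \<Rightarrow> nat \<Rightarrow> (comp \<Rightarrow> real) \<Rightarrow> (comp \<Rightarrow> real) \<Rightarrow> real" where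
  "ell ns e0 N V W = W En - (\<Sum>d<N. vel ns V d * W (Mom d)) + (\<Sum>d<N. (vel ns V d)\<^sup>2) / 2 * dens ns W
      - (\<Sum>i<ns. e0 i * W (Rho i))"

lemma temp_gth: "temp ns e0 cv N V = gth ns e0 N V / (\<Sum>i<ns. V (Rho i) * cv i)"
  unfolding temp_def gth_def by simp

lemma ell_self:
  assumes "dens ns V \<noteq> 0"
  shows "ell ns e0 N V V = gth ns e0 N V"
proof -
  have "(\<Sum>d<N. vel ns V d * V (Mom d)) = (\<Sum>d<N. (V (Mom d))\<^sup>2) / dens ns V"
    unfolding vel_def by (simp add: sum_divide_distrib power2_eq_square)
  moreover have "(\<Sum>d<N. (vel ns V d)\<^sup>2) = (\<Sum>d<N. (V (Mom d))\<^sup>2) / (dens ns V)\<^sup>2"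
    unfolding vel_def by (simp add: sum_divide_distrib power_divide)
  then have "(\<Sum>d<N. (vel ns V d)\<^sup>2) / 2 * dens ns V = (1/2) * (\<Sum>d<N. (V (Mom d))\<^sup>2) / dens ns V"
    using assms by (simp add: power2_eq_square)
  ultimately show ?thesis unfolding ell_def gth_def by (simp add: mult.commute)
qed

lemma ell_phys:
  assumes "d < N"
  shows "ell ns e0 N UK (phys_flux ns r e0 cv N d UL) =
    vel ns UL d * ell ns e0 N UK UL + pres ns r e0 cv N UL * (vel ns UL d - vel ns UK d)"
proof -
  have 1: "(\<Sum>j<N. vel ns UK j * phys_flux ns r e0 cv N d UL (Mom j)) =
     vel ns UL d * (\<Sum>j<N. vel ns UK j * UL (Mom j)) + vel ns UK d * pres ns r e0 cv N UL"
    unfolding phys_flux_def using assms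
    by (simp add: distrib_left sum.distrib sum_distrib_left if_distrib[of "\<lambda>x. _ * x"] sum.delta' algebra_simps
       cong: if_cong)
  have 2: "dens ns (phys_flux ns r e0 cv N d UL) = vel ns UL d * dens ns UL"
    unfolding dens_def phys_flux_def by (simp add: sum_distrib_left algebra_simps)
  have 3: "(\<Sum>i<ns. e0 i * phys_flux ns r e0 cv N d UL (Rho i)) = vel ns UL d * (\<Sum>i<ns. e0 i * UL (Rho i))"
    unfolding phys_flux_def by (simp add: sum_distrib_left algebra_simps)
  show ?thesis unfolding ell_def 1 2 3 by (simp add: phys_flux_def algebra_simps)
qed

lemma ell_other:
  assumes "dens ns UL \<noteq> 0"
  shows "ell ns e0 N UK UL = gth ns e0 N UL + dens ns UL / 2 * (\<Sum>j<N. (vel ns UL j - vel ns UK j)\<^sup>2)"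
proof -
  let ?r = "dens ns UL"
  have a: "(\<Sum>j<N. (vel ns UL j - vel ns UK j)\<^sup>2) = (\<Sum>j<N. (vel ns UL j)\<^sup>2) - 2 * (\<Sum>j<N. vel ns UK j * vel ns UL j)
     + (\<Sum>j<N. (vel ns UK j)\<^sup>2)"
    by (simp add: power2_diff sum.distrib sum_subtractf sum_distrib_left algebra_simps)
  have b: "?r * (\<Sum>j<N. (vel ns UL j)\<^sup>2) = (\<Sum>j<N. (UL (Mom j))\<^sup>2) / ?r"
    unfolding vel_def using assms by (simp add: sum_distrib_left sum_divide_distrib power2_eq_square field_simps)
  have c: "?r * (\<Sum>j<N. vel ns UK j * vel ns UL j) = (\<Sum>j<N. vel ns UK j * UL (Mom j))"
    unfolding vel_def using assms by (simp add: sum_distrib_left field_simps)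
  show ?thesis unfolding ell_def gth_def a
    using b c by (simp add: algebra_simps add_divide_distrib diff_divide_distrib)
qed

lemma key_real:
  fixes R Cv g rho al Q w s :: real
  assumes R: "R > 0" and Cv: "Cv > 0" and rho: "rho > 0" and g: "g > 0"
    and al: "al \<ge> sqrt (((Cv + R) / Cv) * (R * (g / Cv)) / rho)"
    and Q: "Q \<ge> w\<^sup>2" and s: "s = 1 \<or> s = -1"
  shows "al * (g + rho * Q / 2) - s * (R * (g / Cv)) * w \<ge> 0"
proof -
  define p where "p = R * (g / Cv)"
  have p: "p > 0" unfolding p_def using R Cv g by simp
  define c2 where "c2 = ((Cv + R) / Cv) * p / rho"
  have c2: "c2 > 0" unfolding c2_def using p Cv R rho by simp
  have alc: "al \<ge> sqrt c2" using al unfolding c2_def p_def .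
  have al0: "al > 0" using alc c2 by (meson less_le_trans real_sqrt_gt_zero)
  have "al\<^sup>2 \<ge> (sqrt c2)\<^sup>2" using alc c2 by (intro power_mono) auto
  then have al2: "al\<^sup>2 \<ge> c2" using c2 by simp
  have "2 * c2 * rho * g = 2 * (Cv + R) * R * g\<^sup>2 / Cv\<^sup>2"
    unfolding c2_def p_def using rho Cv by (simp add: field_simps power2_eq_square)
  moreover have "p\<^sup>2 = R * R * g\<^sup>2 / Cv\<^sup>2" unfolding p_def by (simp add: field_simps power2_eq_square)
  moreover have "2 * (Cv + R) * R * g\<^sup>2 / Cv\<^sup>2 \<ge> R * R * g\<^sup>2 / Cv\<^sup>2"
    using R Cv by (intro divide_right_mono mult_right_mono) (auto simp: mult_mono)
  ultimately have "2 * c2 * rho * g \<ge> p\<^sup>2" by simp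
  moreover have "2 * al\<^sup>2 * rho * g \<ge> 2 * c2 * rho * g" using al2 rho g by simp
  ultimately have disc: "2 * al\<^sup>2 * rho * g \<ge> p\<^sup>2" by linarith
  have "0 \<le> (al * rho * \<bar>w\<bar> - p)\<^sup>2" by simp
  then have "0 \<le> 2 * al * rho * (al * g + al * rho * w\<^sup>2 / 2 - p * \<bar>w\<bar>)"
    using disc by (simp add: power2_eq_square algebra_simps)
  then have A: "0 \<le> al * g + al * rho * w\<^sup>2 / 2 - p * \<bar>w\<bar>"
    using al0 rho mult_pos_pos[OF al0 rho] by (simp add: zero_le_mult_iff)
  have B: "al * rho * w\<^sup>2 / 2 \<le> al * rho * Q / 2" using Q al0 rho by simp
  have C: "s * p * w \<le> p * \<bar>w\<bar>" using s p by (auto simp: abs_if)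
  show ?thesis using A B C unfolding p_def[symmetric] by (simp add: algebra_simps)
qed

lemma flux_pos:
  assumes ns1: "1 \<le> ns" and rpos: "\<forall>i<ns. r i > 0" and cvpos: "\<forall>i<ns. cv i > 0"
    and rhoL: "\<forall>i<ns. UL (Rho i) > 0" and gL: "gth ns e0 N UL > 0"
    and lam: "lam \<ge> vnorm ns N UL + c_mix ns r e0 cv N UL" and d: "d < N" and s: "s = 1 \<or> s = -1"
  shows "lam * ell ns e0 N UK UL - s * ell ns e0 N UK (phys_flux ns r e0 cv N d UL) \<ge> 0"
proof -
  define R where "R = (\<Sum>i<ns. UL (Rho i) * r i)"
  define Cv where "Cv = (\<Sum>i<ns. UL (Rho i) * cv i)"
  define rho where "rho = dens ns UL"
  define g where "g = gth ns e0 N UL"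
  have nsne: "{..<ns} \<noteq> {}" using ns1 by (auto simp: lessThan_empty_iff)
  have R: "R > 0" unfolding R_def using rhoL rpos nsne by (intro sum_pos) auto
  have Cv: "Cv > 0" unfolding Cv_def using rhoL cvpos nsne by (intro sum_pos) auto
  have rho: "rho > 0" unfolding rho_def dens_def using rhoL nsne by (intro sum_pos) auto
  have gpos: "g > 0" using gL unfolding g_def .
  have gam: "gamma_mix ns r cv UL = (Cv + R) / Cv"
    unfolding gamma_mix_def Cv_def R_def by (simp add: distrib_left sum.distrib)
  have pr: "pres ns r e0 cv N UL = R * (g / Cv)"
    unfolding pres_def temp_gth R_def g_def Cv_def by simp
  have cm: "c_mix ns r e0 cv N UL = sqrt (((Cv + R) / Cv) * (R * (g / Cv)) / rho)"
    unfolding c_mix_def gam pr rho_def by simp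
  define v where "v = vel ns UL d"
  define w where "w = vel ns UL d - vel ns UK d"
  define Q where "Q = (\<Sum>j<N. (vel ns UL j - vel ns UK j)\<^sup>2)"
  have Q: "Q \<ge> w\<^sup>2" unfolding Q_def w_def using d by (intro member_le_sum) auto
  have al: "lam - s * v \<ge> sqrt (((Cv + R) / Cv) * (R * (g / Cv)) / rho)"
  proof -
    have "\<bar>v\<bar> \<le> vnorm ns N UL" unfolding v_def by (rule vel_le_vnorm[OF d])
    moreover have "s * v \<le> \<bar>v\<bar>" using s by auto
    ultimately show ?thesis using lam cm by linarith
  qed
  have el: "ell ns e0 N UK UL = g + rho * Q / 2"
    using ell_other[of ns UL e0 N UK] rho unfolding rho_def g_def Q_def by simp
  have "lam * ell ns e0 N UK UL - s * ell ns e0 N UK (phys_flux ns r e0 cv N d UL)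
     = (lam - s * v) * (g + rho * Q / 2) - s * (R * (g / Cv)) * w"
    unfolding ell_phys[OF d] el pr[symmetric] v_def w_def by (simp add: algebra_simps)
  also have "\<dots> \<ge> 0" by (rule key_real[OF R Cv rho gpos al Q s])
  finally show ?thesis .
qed

definition Qv where "Qv ns N V = (\<Sum>d<N. (vel ns V d)\<^sup>2) / 2"

lemma ell_alt: "ell ns e0 N V W = W En - (\<Sum>d<N. vel ns V d * W (Mom d)) + Qv ns N V * dens ns W
      - (\<Sum>i<ns. e0 i * W (Rho i))"
  unfolding ell_def Qv_def by simp

lemma dens_sum:
  assumes "finite S"
  shows "dens ns (\<lambda>c. \<Sum>x\<in>S. F x c) = (\<Sum>x\<in>S. dens ns (F x))"
  unfolding dens_def by (rule sum.swap)

lemma ell_sum: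
  assumes "finite S"
  shows "ell ns e0 N V (\<lambda>c. \<Sum>x\<in>S. F x c) = (\<Sum>x\<in>S. ell ns e0 N V (F x))"
  unfolding ell_alt dens_sum[OF assms]
  by (simp add: sum.distrib sum_subtractf sum_distrib_left sum.swap[of _ S])

lemma ell_lin2:
  "ell ns e0 N V (\<lambda>c. a * X c + b * Y c) = a * ell ns e0 N V X + b * ell ns e0 N V Y"
proof -
  have d: "dens ns (\<lambda>c. a * X c + b * Y c) = a * dens ns X + b * dens ns Y"
    unfolding dens_def by (simp add: sum.distrib sum_distrib_left)
  show ?thesis unfolding ell_alt d
    by (simp add: sum.distrib sum_subtractf sum_distrib_left algebra_simps)
qed

lemma ell_scale:
  "ell ns e0 N V (\<lambda>c. a * X c) = a * ell ns e0 N V X"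
  using ell_lin2[of ns e0 N V a X 0 X] by simp

lemma ell_add:
  "ell ns e0 N V (\<lambda>c. X c + Y c) = ell ns e0 N V X + ell ns e0 N V Y"
  using ell_lin2[of ns e0 N V 1 X 1 Y] by simp

lemma ell_lf:
  "ell ns e0 N V (lf_flux ns r e0 cv N d \<sigma> UK UL) =
     (ell ns e0 N V (phys_flux ns r e0 cv N d UK) + ell ns e0 N V (phys_flux ns r e0 cv N d UL)) / 2 * side_sign \<sigma>
     - lamKL ns r e0 cv N UK UL / 2 * (ell ns e0 N V UL - ell ns e0 N V UK)"
proof -
  let ?s = "side_sign \<sigma>" and ?l = "lamKL ns r e0 cv N UK UL"
  have "lf_flux ns r e0 cv N d \<sigma> UK UL = (\<lambda>c. (?s/2) * phys_flux ns r e0 cv N d UK c + (?s/2) * phys_flux ns r e0 cv N d UL c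
     + ((- ?l/2) * UL c + (?l/2) * UK c))"
    by (rule ext) (simp add: lf_unfold field_simps)
  then show ?thesis by (simp only: ell_add ell_scale) (simp add: algebra_simps add_divide_distrib diff_divide_distrib)
qed

definition LamK where
  "LamK ns r e0 cv N M V K = (\<Sum>d<N. lamKL ns r e0 cv N (V K) (V (nbr M K d True)) + lamKL ns r e0 cv N (V K) (V (nbr M K d False)))"

lemma g_rhs_ge:
  assumes N1: "1 \<le> N" and M1: "1 \<le> M" and K: "K \<in> cells N M"
    and ns1: "1 \<le> ns" and rpos: "\<forall>i<ns. r i > 0" and cvpos: "\<forall>i<ns. cv i > 0"
    and adm: "\<forall>L\<in>cells N M. (\<forall>i<ns. V L (Rho i) > 0) \<and> gth ns e0 N (V L) > 0"
  shows "ell ns e0 N (V K) (\<lambda>c. fv_rhs ns r e0 cv N M V K c) \<ge> -(real M / 2) * LamK ns r e0 cv N M V K * gth ns e0 N (V K)"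
proof -
  let ?E = "ell ns e0 N (V K)"
  have densK: "dens ns (V K) \<noteq> 0"
  proof -
    have "{..<ns} \<noteq> {}" using ns1 by (auto simp: lessThan_empty_iff)
    then have "dens ns (V K) > 0" unfolding dens_def using adm K by (intro sum_pos) auto
    then show ?thesis by simp
  qed
  have gK: "?E (V K) = gth ns e0 N (V K)" by (rule ell_self[OF densK])
  have eq: "(\<lambda>c. fv_rhs ns r e0 cv N M V K c) = (\<lambda>c. (- real M) * (\<Sum>d<N.
     lf_flux ns r e0 cv N d True (V K) (V (nbr M K d True)) c +
     lf_flux ns r e0 cv N d False (V K) (V (nbr M K d False)) c))"
    by (rule ext) (simp add: rhs_split[OF N1 M1])
  have each: "?E (lf_flux ns r e0 cv N d True (V K) (V (nbr M K d True))) +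
     ?E (lf_flux ns r e0 cv N d False (V K) (V (nbr M K d False)))
     \<le> (lamKL ns r e0 cv N (V K) (V (nbr M K d True)) + lamKL ns r e0 cv N (V K) (V (nbr M K d False))) / 2
        * gth ns e0 N (V K)" if d: "d < N" for d
  proof -
    let ?L1 = "nbr M K d True" and ?L0 = "nbr M K d False"
    have L1: "?L1 \<in> cells N M" and L0: "?L0 \<in> cells N M" using nbr_cells K d M1 by auto
    have p1: "lamKL ns r e0 cv N (V K) (V ?L1) * ?E (V ?L1) - 1 * ?E (phys_flux ns r e0 cv N d (V ?L1)) \<ge> 0"
      by (rule flux_pos[OF ns1 rpos cvpos]) (use adm L1 d in \<open>auto simp: lamKL_def\<close>)
    have p0: "lamKL ns r e0 cv N (V K) (V ?L0) * ?E (V ?L0) - (-1) * ?E (phys_flux ns r e0 cv N d (V ?L0)) \<ge> 0"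
      by (rule flux_pos[OF ns1 rpos cvpos]) (use adm L0 d in \<open>auto simp: lamKL_def\<close>)
    show ?thesis unfolding ell_lf side_sign_def gK using p1 p0 by (simp add: field_simps)
  qed
  have "(\<Sum>d<N. ?E (lf_flux ns r e0 cv N d True (V K) (V (nbr M K d True))) +
     ?E (lf_flux ns r e0 cv N d False (V K) (V (nbr M K d False))))
     \<le> (\<Sum>d<N. (lamKL ns r e0 cv N (V K) (V (nbr M K d True)) + lamKL ns r e0 cv N (V K) (V (nbr M K d False))) / 2
        * gth ns e0 N (V K))"
    by (rule sum_mono) (use each in auto)
  also have "\<dots> = LamK ns r e0 cv N M V K / 2 * gth ns e0 N (V K)"
    unfolding LamK_def by (simp add: sum_distrib_right sum_divide_distrib)
  finally have S: "(\<Sum>d<N. ?E (lf_flux ns r e0 cv N d True (V K) (V (nbr M K d True))) +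
     ?E (lf_flux ns r e0 cv N d False (V K) (V (nbr M K d False))))
     \<le> LamK ns r e0 cv N M V K / 2 * gth ns e0 N (V K)" .
  have "?E (\<lambda>c. fv_rhs ns r e0 cv N M V K c) = - real M * (\<Sum>d<N. ?E (lf_flux ns r e0 cv N d True (V K) (V (nbr M K d True))) +
     ?E (lf_flux ns r e0 cv N d False (V K) (V (nbr M K d False))))"
    unfolding eq ell_scale by (simp add: ell_sum ell_add)
  then show ?thesis using mult_left_mono[OF S, of "real M"] by (simp add: algebra_simps)
qed

lemma gth_deriv:
  assumes der: "\<forall>c\<in>comps ns N. ((\<lambda>t. X t c) has_real_derivative X' c) (at \<tau> within S)"
    and dn: "dens ns (X \<tau>) \<noteq> 0"
  shows "((\<lambda>t. gth ns e0 N (X t)) has_real_derivative ell ns e0 N (X \<tau>) X') (at \<tau> within S)"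
proof -
  have dE: "((\<lambda>t. X t En) has_real_derivative X' En) (at \<tau> within S)" using der by (simp add: comps_def)
  have dM: "((\<lambda>t. X t (Mom d)) has_real_derivative X' (Mom d)) (at \<tau> within S)" if "d < N" for d
    using der that by (auto simp: comps_def)
  have dR: "((\<lambda>t. X t (Rho i)) has_real_derivative X' (Rho i)) (at \<tau> within S)" if "i < ns" for i
    using der that by (auto simp: comps_def)
  define Sq where "Sq = (\<lambda>t. \<Sum>d<N. (X t (Mom d))\<^sup>2)"
  define Sq' where "Sq' = (\<Sum>d<N. 2 * (X' (Mom d) * X \<tau> (Mom d)))"
  have dS: "(Sq has_real_derivative Sq') (at \<tau> within S)"
    unfolding Sq_def Sq'_def
    by (rule DERIV_sum) (use DERIV_power[OF dM, of _ 2] in simp)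
  define D where "D = (\<lambda>t. dens ns (X t))"
  have dD: "(D has_real_derivative dens ns X') (at \<tau> within S)"
    unfolding D_def dens_def by (rule DERIV_sum) (use dR in simp)
  define P where "P = (\<lambda>t. \<Sum>i<ns. X t (Rho i) * e0 i)"
  have dP: "(P has_real_derivative (\<Sum>i<ns. X' (Rho i) * e0 i)) (at \<tau> within S)"
    unfolding P_def by (rule DERIV_sum) (use DERIV_mult[OF dR DERIV_const] in simp)
  have dq: "((\<lambda>t. (1/2) * Sq t / D t) has_real_derivative
     ((1/2) * Sq' * D \<tau> - (1/2) * Sq \<tau> * dens ns X') / (D \<tau> * D \<tau>)) (at \<tau> within S)"
    by (rule DERIV_divide[OF DERIV_cmult[OF dS] dD]) (use dn in \<open>simp add: D_def\<close>)
  have dg: "((\<lambda>t. X t En - ((1/2) * Sq t / D t + P t)) has_real_derivative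
     X' En - (((1/2) * Sq' * D \<tau> - (1/2) * Sq \<tau> * dens ns X') / (D \<tau> * D \<tau>) + (\<Sum>i<ns. X' (Rho i) * e0 i)))
     (at \<tau> within S)"
    by (intro DERIV_diff DERIV_add dE dq dP)
  have e1: "(1/2) * Sq' * D \<tau> / (D \<tau> * D \<tau>) = (\<Sum>d<N. vel ns (X \<tau>) d * X' (Mom d))"
    unfolding Sq'_def vel_def D_def using dn
    by (simp add: sum_distrib_left sum_divide_distrib sum_distrib_right field_simps)
  have e2: "(1/2) * Sq \<tau> * dens ns X' / (D \<tau> * D \<tau>) = (\<Sum>d<N. (vel ns (X \<tau>) d)\<^sup>2) / 2 * dens ns X'"
    unfolding Sq_def vel_def D_def using dn
    by (simp add: power_divide sum_divide_distrib[symmetric] power2_eq_square)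
  have "X' En - (((1/2) * Sq' * D \<tau> - (1/2) * Sq \<tau> * dens ns X') / (D \<tau> * D \<tau>) + (\<Sum>i<ns. X' (Rho i) * e0 i))
     = ell ns e0 N (X \<tau>) X'"
    unfolding ell_def diff_divide_distrib e1 e2 by (simp add: mult.commute)
  moreover have "(\<lambda>t. gth ns e0 N (X t)) = (\<lambda>t. X t En - ((1/2) * Sq t / D t + P t))"
    unfolding gth_def Sq_def D_def P_def by simp
  ultimately show ?thesis using dg by simp
qed

lemma barrier:
  fixes h :: "'k \<Rightarrow> real \<Rightarrow> real"
  assumes fin: "finite I" and t0: "0 \<le> t0"
    and cont: "\<forall>k\<in>I. continuous_on {0..t0} (h k)"
    and init: "\<forall>k\<in>I. h k 0 > l"
    and step: "\<And>\<tau> k. \<tau> \<in> {0<..t0} \<Longrightarrow> k \<in> I \<Longrightarrow> h k \<tau> = l \<Longrightarrow>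
        (\<forall>j\<in>I. \<forall>s\<in>{0..\<tau>}. h j s \<ge> l) \<Longrightarrow> \<exists>D>0. (h k has_real_derivative D) (at \<tau> within {0..t0})"
  shows "\<forall>k\<in>I. \<forall>t\<in>{0..t0}. h k t > l"
proof (rule ccontr)
  assume "\<not> ?thesis"
  then obtain k0 t1 where k0: "k0 \<in> I" and t1: "t1 \<in> {0..t0}" and bad: "h k0 t1 \<le> l" by force
  define F where "F = (\<Union>k\<in>I. {0..t0} \<inter> h k -` {..l})"
  have clF: "closed F" unfolding F_def
    using fin cont by (intro closed_UN) (auto intro: continuous_closed_preimage)
  have "t1 \<in> F" using k0 t1 bad unfolding F_def by auto
  then have neF: "F \<noteq> {}" by auto
  have bdF: "bdd_below F" unfolding F_def by (rule bdd_belowI[of _ 0]) auto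
  define \<tau> where "\<tau> = Inf F"
  have tF: "\<tau> \<in> F" unfolding \<tau>_def using closed_contains_Inf[OF neF bdF clF] .
  then obtain k where k: "k \<in> I" and tau: "\<tau> \<in> {0..t0}" and hk: "h k \<tau> \<le> l" unfolding F_def by auto
  have before: "h j s > l" if "j \<in> I" "s \<in> {0..t0}" "s < \<tau>" for j s
  proof (rule ccontr)
    assume "\<not> h j s > l"
    then have "s \<in> F" unfolding F_def using that by (auto intro!: bexI[of _ j])
    then have "\<tau> \<le> s" unfolding \<tau>_def using bdF by (rule cInf_lower)
    then show False using that by simp
  qed
  have tpos: "\<tau> > 0"
  proof (rule ccontr)
    assume "\<not> \<tau> > 0"
    then have "\<tau> = 0" using tau by auto
    then show False using hk init k by force
  qed
  have ge: "h j s \<ge> l" if j: "j \<in> I" and s: "s \<in> {0..\<tau>}" for j s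
  proof (cases "s < \<tau>")
    case True then show ?thesis using before[OF j] s tau by force
  next
    case False
    then have s\<tau>: "s = \<tau>" using s by auto
    have "continuous_on (closure {0..<\<tau>}) (h j)"
      using tpos cont j tau by (auto intro: continuous_on_subset)
    moreover have "\<tau> \<in> closure {0..<\<tau>}" using tpos by simp
    ultimately have "h j \<tau> \<ge> l"
      by (rule continuous_ge_on_closure) (use before[OF j] tau in \<open>force\<close>)
    then show ?thesis using s\<tau> by simp
  qed
  have eq: "h k \<tau> = l" using ge[OF k, of \<tau>] hk tau by auto
  obtain D where D: "D > 0" "(h k has_real_derivative D) (at \<tau> within {0..t0})"
    using step[of \<tau> k] tpos tau k eq ge by force
  obtain d where d: "d > 0" "\<forall>hh>0. \<tau> - hh \<in> {0..t0} \<longrightarrow> hh < d \<longrightarrow> h k (\<tau> - hh) < h k \<tau>"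
    using has_real_derivative_pos_inc_left[OF D(2) D(1)] by blast
  define hh where "hh = min (d/2) \<tau>"
  have hh: "hh > 0" "hh < d" "\<tau> - hh \<in> {0..t0}" "\<tau> - hh < \<tau>"
    unfolding hh_def using d tpos tau by auto
  have "h k (\<tau> - hh) < l" using d(2) hh eq by auto
  moreover have "h k (\<tau> - hh) > l" using before[OF k hh(3) hh(4)] .
  ultimately show False by simp
qed

lemma finite_cells: "finite (cells N M)"
proof -
  let ?e = "\<lambda>g d. if d < N then g d else (0::nat)"
  have "cells N M \<subseteq> ?e ` ({..<N} \<rightarrow>\<^sub>E {..<M})"
  proof
    fix K assume K: "K \<in> cells N M"
    have "K = ?e (restrict K {..<N})" using K unfolding cells_def by (auto simp: fun_eq_iff)
    moreover have "restrict K {..<N} \<in> {..<N} \<rightarrow>\<^sub>E {..<M}" using K unfolding cells_def by auto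
    ultimately show "K \<in> ?e ` ({..<N} \<rightarrow>\<^sub>E {..<M})" by blast
  qed
  moreover have "finite (?e ` ({..<N} \<rightarrow>\<^sub>E {..<M}))" by (intro finite_imageI finite_PiE) auto
  ultimately show ?thesis by (rule finite_subset)
qed

lemma cells_ne: "1 \<le> M \<Longrightarrow> cells N M \<noteq> {}"
  unfolding cells_def by (rule ccontr) (auto dest!: spec[of _ "\<lambda>_. 0"])

lemma finite_pos_lb:
  assumes "finite I" "\<forall>k\<in>I. f k > (0::real)"
  shows "\<exists>l>0. \<forall>k\<in>I. f k > l"
  using assms
proof (induction I rule: finite_induct)
  case empty then show ?case by (intro exI[of _ 1]) auto
next
  case (insert x F)
  then obtain l where l: "l > 0" "\<forall>k\<in>F. f k > l" by auto
  show ?case using l insert.prems by (intro exI[of _ "min l (f x / 2)"]) auto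
qed

lemma cont_Max:
  fixes f :: "'k \<Rightarrow> real \<Rightarrow> real"
  assumes "finite S" "S \<noteq> {}" "\<forall>K\<in>S. continuous F (f K)"
  shows "continuous F (\<lambda>t. Max ((\<lambda>K. f K t) ` S))"
  using assms
proof (induction S rule: finite_ne_induct)
  case (singleton x) then show ?case by simp
next
  case (insert x F')
  have "(\<lambda>t. Max ((\<lambda>K. f K t) ` insert x F')) = (\<lambda>t. max (f x t) (Max ((\<lambda>K. f K t) ` F')))"
    using insert by (auto simp: fun_eq_iff)
  moreover have "continuous F (\<lambda>t. max (f x t) (Max ((\<lambda>K. f K t) ` F')))"
    using insert by (intro continuous_max) auto
  ultimately show ?case by simp
qed

lemma dens_pos:
  assumes "1 \<le> ns" "\<forall>i<ns. V (Rho i) > 0"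
  shows "dens ns V > 0"
proof -
  have "{..<ns} \<noteq> {}" using assms by (auto simp: lessThan_empty_iff)
  then show ?thesis unfolding dens_def using assms by (intro sum_pos) auto
qed

lemma wsum_pos:
  assumes "1 \<le> ns" "\<forall>i<ns. V (Rho i) > 0" "\<forall>i<ns. w i > (0::real)"
  shows "(\<Sum>i<ns. V (Rho i) * w i) > 0"
proof -
  have "{..<ns} \<noteq> {}" using assms by (auto simp: lessThan_empty_iff)
  then show ?thesis using assms by (intro sum_pos) auto
qed

lemma c_mix_nonneg:
  assumes "1 \<le> ns" "\<forall>i<ns. V (Rho i) > 0" "\<forall>i<ns. r i > 0" "\<forall>i<ns. cv i > 0" "gth ns e0 N V > 0"
  shows "c_mix ns r e0 cv N V \<ge> 0"
proof -
  have a: "(\<Sum>i<ns. V (Rho i) * cv i) > 0" using wsum_pos assms by blast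
  have b: "(\<Sum>i<ns. V (Rho i) * r i) > 0" using wsum_pos assms by blast
  have c: "(\<Sum>i<ns. V (Rho i) * (cv i + r i)) > 0" using wsum_pos[of ns V "\<lambda>i. cv i + r i"] assms
    by (simp add: add_pos_pos)
  have "gamma_mix ns r cv V * pres ns r e0 cv N V / dens ns V \<ge> 0"
    unfolding gamma_mix_def pres_def temp_gth using a b c assms dens_pos[OF assms(1,2)]
    by (simp add: divide_nonneg_pos mult_nonneg_nonneg less_imp_le)
  then show ?thesis unfolding c_mix_def by simp
qed

lemma state_cont:
  assumes cc: "\<forall>c\<in>comps ns N. continuous (at t within S) (\<lambda>s. X s c)"
    and pos: "\<forall>i<ns. X t (Rho i) > 0" and ns1: "1 \<le> ns" and cvpos: "\<forall>i<ns. cv i > 0"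
    and rpos: "\<forall>i<ns. r i > 0"
  shows "continuous (at t within S) (\<lambda>s. vnorm ns N (X s))"
    "continuous (at t within S) (\<lambda>s. gth ns e0 N (X s))"
    "continuous (at t within S) (\<lambda>s. c_mix ns r e0 cv N (X s))"
proof -
  have cR: "continuous (at t within S) (\<lambda>s. X s (Rho i))" if "i < ns" for i using cc that by (auto simp: comps_def)
  have cM: "continuous (at t within S) (\<lambda>s. X s (Mom d))" if "d < N" for d using cc that by (auto simp: comps_def)
  have cE: "continuous (at t within S) (\<lambda>s. X s En)" using cc by (auto simp: comps_def)
  have cD: "continuous (at t within S) (\<lambda>s. dens ns (X s))" unfolding dens_def
    by (intro continuous_intros cR) auto
  have dn: "dens ns (X t) \<noteq> 0" using dens_pos[OF ns1 pos] by simp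
  have cvn: "(\<Sum>i<ns. X t (Rho i) * cv i) \<noteq> 0" using wsum_pos[OF ns1 pos cvpos] by simp
  show "continuous (at t within S) (\<lambda>s. vnorm ns N (X s))" unfolding vnorm_def vel_def
    by (intro continuous_intros cM cD dn) auto
  show cg: "continuous (at t within S) (\<lambda>s. gth ns e0 N (X s))" unfolding gth_def
    by (intro continuous_intros cM cD dn cE cR) auto
  have cT: "continuous (at t within S) (\<lambda>s. temp ns e0 cv N (X s))" unfolding temp_gth
    by (intro continuous_intros cg cR cvn) auto
  show "continuous (at t within S) (\<lambda>s. c_mix ns r e0 cv N (X s))"
    unfolding c_mix_def gamma_mix_def pres_def
    by (intro continuous_intros cT cR cD dn cvn) auto
qed



theorem lemma3p2:
  fixes N M ns :: nat and r e0 cv :: "nat \<Rightarrow> real" and T Z :: real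
    and U :: "(nat \<Rightarrow> nat) \<Rightarrow> real \<Rightarrow> comp \<Rightarrow> real"
  assumes dim: "1 \<le> N" "N \<le> 3"
    and mesh: "1 \<le> M"
    and species: "1 \<le> ns"
    and r_pos: "\<forall>i<ns. r i > 0"
    and cv_pos: "\<forall>i<ns. cv i > 0"
    and scheme: "\<forall>K\<in>cells N M. \<forall>t\<in>{0..T}. \<forall>c\<in>comps ns N.
        ((\<lambda>\<tau>. U K \<tau> c) has_real_derivative fv_rhs ns r e0 cv N M (\<lambda>L. U L t) K c)
          (at t within {0..T})"
    and rho0: "\<forall>K\<in>cells N M. \<forall>i<ns. U K 0 (Rho i) > 0"
    and vel_L2Linf: "(\<lambda>t. (Max ((\<lambda>K. vnorm ns N (U K t)) ` cells N M))\<^sup>2) integrable_on {0..T}"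
    and s0: "\<forall>K\<in>cells N M. temp ns e0 cv N (U K 0) > 0 \<and> spec_entropy ns r e0 cv N (U K 0) \<ge> Z"
  shows "\<forall>K\<in>cells N M. \<forall>t\<in>{0..T}.
           temp ns e0 cv N (U K t) > 0 \<and> pres ns r e0 cv N (U K t) > 0"
proof -
  let ?C = "cells N M"
  have finC: "finite ?C" by (rule finite_cells)
  have neC: "?C \<noteq> {}" by (rule cells_ne[OF mesh])
  have dU: "((\<lambda>\<tau>. U K \<tau> c) has_real_derivative fv_rhs ns r e0 cv N M (\<lambda>L. U L t) K c) (at t within {0..T})"
    if "K \<in> ?C" "t \<in> {0..T}" "c \<in> comps ns N" for K t c
    using scheme that by blast
  have cUw: "continuous (at t within {0..T}) (\<lambda>s. U K s c)"
    if "K \<in> ?C" "t \<in> {0..T}" "c \<in> comps ns N" for K t c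
    using DERIV_continuous[OF dU[OF that]] .
  have cU: "continuous_on {0..T} (\<lambda>t. U K t c)" if "K \<in> ?C" "c \<in> comps ns N" for K c
    using cUw that by (simp add: continuous_on_eq_continuous_within)
  have RhoC: "Rho i \<in> comps ns N" if "i < ns" for i using that by (simp add: comps_def)
  have cUwS: "\<forall>c\<in>comps ns N. continuous (at t within S) (\<lambda>s. U K s c)"
    if "K \<in> ?C" "t \<in> S" "S \<subseteq> {0..T}" for K t S
    using cUw that by (meson continuous_within_subset subsetD)
  define good where "good t \<longleftrightarrow> (\<forall>K\<in>?C. (\<forall>i<ns. U K t (Rho i) > 0) \<and> gth ns e0 N (U K t) > 0)" for t
  have main: "\<forall>t\<in>{0..T}. good t"
  proof (rule ccontr)
    assume "\<not> (\<forall>t\<in>{0..T}. good t)"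
    then obtain t1 where t1: "t1 \<in> {0..T}" "\<not> good t1" by blast
    define Gp where "Gp K t = dens ns (U K t) * (U K t En - (\<Sum>i<ns. U K t (Rho i) * e0 i))
       - (1/2) * (\<Sum>d<N. (U K t (Mom d))\<^sup>2)" for K t
    have Gp_eq: "Gp K t = dens ns (U K t) * gth ns e0 N (U K t)" if "\<forall>i<ns. U K t (Rho i) > 0" for K t
    proof -
      have "dens ns (U K t) > 0" using dens_pos[OF species that] .
      then show ?thesis unfolding Gp_def gth_def by (simp add: field_simps)
    qed
    define Fb where "Fb = (\<Union>K\<in>?C. (\<Union>i\<in>{..<ns}. {0..T} \<inter> (\<lambda>t. U K t (Rho i)) -` {..0})
        \<union> ({0..T} \<inter> Gp K -` {..0}))"
    have cGp: "continuous_on {0..T} (Gp K)" if "K \<in> ?C" for K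
      unfolding Gp_def dens_def using cU[OF that] by (intro continuous_intros) (auto simp: comps_def)
    have c1: "closed ({0..T} \<inter> (\<lambda>t. U K t (Rho i)) -` {..0})" if "K \<in> ?C" "i \<in> {..<ns}" for K i
      by (rule continuous_closed_preimage[OF cU]) (use that RhoC in auto)
    have c2: "closed ({0..T} \<inter> Gp K -` {..0})" if "K \<in> ?C" for K
      by (rule continuous_closed_preimage[OF cGp]) (use that in auto)
    have clF: "closed Fb" unfolding Fb_def
      by (intro closed_UN ballI closed_Un finite_lessThan finC c2 c1) assumption+
    have notF: "t \<notin> Fb" if "good t" for t
    proof
      assume "t \<in> Fb"
      then obtain K where K: "K \<in> ?C" and h: "(\<exists>i<ns. U K t (Rho i) \<le> 0) \<or> Gp K t \<le> 0"
        unfolding Fb_def by auto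
      have p: "\<forall>i<ns. U K t (Rho i) > 0" "gth ns e0 N (U K t) > 0" using that K unfolding good_def by auto
      then have "Gp K t > 0" using Gp_eq[OF p(1)] dens_pos[OF species p(1)] by simp
      then show False using h p by force
    qed
    have inF: "t \<in> Fb" if tt: "t \<in> {0..T}" "\<not> good t" for t
    proof -
      obtain K where K: "K \<in> ?C" and h: "\<not> ((\<forall>i<ns. U K t (Rho i) > 0) \<and> gth ns e0 N (U K t) > 0)"
        using tt unfolding good_def by blast
      show ?thesis
      proof (cases "\<forall>i<ns. U K t (Rho i) > 0")
        case True
        then have "Gp K t \<le> 0" using h Gp_eq[OF True] dens_pos[OF species True]
          by (simp add: mult_le_0_iff)
        then show ?thesis unfolding Fb_def using K tt by auto
      next
        case False
        then show ?thesis unfolding Fb_def using K tt by (auto simp: not_less)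
      qed
    qed
    have neF: "Fb \<noteq> {}" using inF[OF t1] by auto
    have bdF: "bdd_below Fb" unfolding Fb_def by (rule bdd_belowI[of _ 0]) auto
    define tf where "tf = Inf Fb"
    have tfF: "tf \<in> Fb" unfolding tf_def using closed_contains_Inf[OF neF bdF clF] .
    have tfT: "tf \<in> {0..T}" using tfF unfolding Fb_def by auto
    have before: "good t" if "t \<in> {0..T}" "t < tf" for t
    proof (rule ccontr)
      assume "\<not> good t"
      then have "t \<in> Fb" using inF that by auto
      then have "tf \<le> t" unfolding tf_def using bdF by (rule cInf_lower)
      then show False using that by simp
    qed
    have good0: "good 0"
      unfolding good_def
    proof
      fix K assume K: "K \<in> ?C"
      have p: "\<forall>i<ns. U K 0 (Rho i) > 0" using rho0 K by auto
      have "temp ns e0 cv N (U K 0) > 0" using s0 K by auto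
      then have "gth ns e0 N (U K 0) > 0" using wsum_pos[OF species p cv_pos]
        unfolding temp_gth by (simp add: zero_less_divide_iff)
      then show "(\<forall>i<ns. U K 0 (Rho i) > 0) \<and> gth ns e0 N (U K 0) > 0" using p by simp
    qed
    have tfpos: "tf > 0"
    proof (rule ccontr)
      assume "\<not> tf > 0"
      then have "tf = 0" using tfT by auto
      then show False using notF[OF good0] tfF by simp
    qed
    have tfT': "tf \<le> T" using tfT by simp
    define um where "um t = Max ((\<lambda>K. vnorm ns N (U K t)) ` ?C)" for t
    define a where "a t = real M * real N * (1 + (um t)\<^sup>2)" for t
    have a_int: "a integrable_on {0..T}"
    proof -
      have "(\<lambda>t. (um t)\<^sup>2) integrable_on {0..T}" using vel_L2Linf unfolding um_def .
      then have "(\<lambda>t. real M * real N * 1 + real M * real N * (um t)\<^sup>2) integrable_on {0..T}"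
        by (intro integrable_add integrable_const_ivl) (rule integrable_on_cmult_left[where c="real M * real N", simplified])
      then show ?thesis unfolding a_def by (simp add: distrib_left)
    qed
    have a_nn: "a t \<ge> 0" for t unfolding a_def by simp
    define A where "A t = integral {0..t} a" for t
    have cA: "continuous_on {0..T} A" unfolding A_def by (rule indefinite_integral_continuous_1[OF a_int])
    define Atot where "Atot = integral {0..T} a"
    have A_le: "A t \<le> Atot" if "t \<in> {0..T}" for t
      unfolding A_def Atot_def
      by (rule integral_subset_le) (use that a_int a_nn in \<open>auto intro: integrable_on_subinterval\<close>)
    have A0: "A 0 = 0" unfolding A_def by simp
    have um_ge: "vnorm ns N (U L t) \<le> um t" if "L \<in> ?C" for L t
      unfolding um_def using finC that by (intro Max_ge) auto
    obtain l1 where l1: "l1 > 0" "\<forall>k\<in>?C \<times> {..<ns}. (\<lambda>(K,i). U K 0 (Rho i)) k > l1"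
      using finite_pos_lb[of "?C \<times> {..<ns}" "\<lambda>(K,i). U K 0 (Rho i)"] finC rho0 by auto
    define rm where "rm = l1 * exp (-(Atot + T))"
    have rm: "rm > 0" unfolding rm_def using l1 by simp
    have low: "U K t0 (Rho i) \<ge> rm" if t0: "t0 \<in> {0..T}" "t0 < tf" and K: "K \<in> ?C" and i: "i < ns" for t0 K i
    proof -
      define h where "h = (\<lambda>(K,i) t. U K t (Rho i) * exp (A t + t))"
      have sub: "{0..t0} \<subseteq> {0..T}" using t0 by auto
      have "\<forall>k\<in>?C \<times> {..<ns}. \<forall>t\<in>{0..t0}. h k t > l1"
      proof (rule barrier)
        show "finite (?C \<times> {..<ns})" using finC by simp
        show "0 \<le> t0" using t0 by simp
        show "\<forall>k\<in>?C \<times> {..<ns}. continuous_on {0..t0} (h k)"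
        proof
          fix k assume k: "k \<in> ?C \<times> {..<ns}"
          then obtain K' i' where k': "k = (K', i')" "K' \<in> ?C" "i' < ns" by auto
          have "continuous_on {0..t0} (\<lambda>t. U K' t (Rho i'))" using cU[OF k'(2) RhoC[OF k'(3)]] sub
            by (rule continuous_on_subset)
          moreover have "continuous_on {0..t0} A" using cA sub by (rule continuous_on_subset)
          ultimately show "continuous_on {0..t0} (h k)" unfolding h_def k'(1)
            by (auto intro!: continuous_intros)
        qed
        show "\<forall>k\<in>?C \<times> {..<ns}. h k 0 > l1" using l1 A0 unfolding h_def by auto
      next
        fix \<tau> k assume tau: "\<tau> \<in> {0<..t0}" and k: "k \<in> ?C \<times> {..<ns}" and hk: "h k \<tau> = l1"
          and allge: "\<forall>j\<in>?C \<times> {..<ns}. \<forall>s\<in>{0..\<tau>}. h j s \<ge> l1"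
        obtain K' i' where k': "k = (K', i')" "K' \<in> ?C" "i' < ns" using k by auto
        have tauT: "\<tau> \<in> {0..T}" using tau t0 by auto
        have gt: "good \<tau>" using before[OF tauT] tau t0 by auto
        define e where "e = exp (A \<tau> + \<tau>)"
        have e: "e > 0" unfolding e_def by simp
        have ord: "\<forall>L\<in>?C. 0 \<le> U K' \<tau> (Rho i') \<and> U K' \<tau> (Rho i') \<le> U L \<tau> (Rho i')"
        proof
          fix L assume L: "L \<in> ?C"
          have "h (L, i') \<tau> \<ge> h (K', i') \<tau>" using allge L k' hk tau by auto
          then have "U L \<tau> (Rho i') * e \<ge> U K' \<tau> (Rho i') * e" unfolding h_def e_def by simp
          then have "U L \<tau> (Rho i') \<ge> U K' \<tau> (Rho i')" using e by simp
          moreover have "U K' \<tau> (Rho i') > 0" using gt k' unfolding good_def by auto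
          ultimately show "0 \<le> U K' \<tau> (Rho i') \<and> U K' \<tau> (Rho i') \<le> U L \<tau> (Rho i')" by simp
        qed
        have cpos: "\<forall>L\<in>?C. c_mix ns r e0 cv N (U L \<tau>) \<ge> 0"
          using gt c_mix_nonneg[OF species _ r_pos cv_pos] unfolding good_def by auto
        have rr: "fv_rhs ns r e0 cv N M (\<lambda>L. U L \<tau>) K' (Rho i') \<ge> -(real M * real N * um \<tau>) * U K' \<tau> (Rho i')"
          by (rule rho_rhs_ge[OF dim(1) mesh k'(2)])
             (use ord cpos um_ge in auto)
        have "um \<tau> \<le> 1 + (um \<tau>)\<^sup>2" by (simp add: power2_eq_square) (smt (verit) mult_nonneg_nonneg mult_le_cancel_left1)
        then have "real M * real N * um \<tau> \<le> a \<tau>" unfolding a_def by (intro mult_left_mono) auto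
        then have rr2: "fv_rhs ns r e0 cv N M (\<lambda>L. U L \<tau>) K' (Rho i') \<ge> -(a \<tau>) * U K' \<tau> (Rho i')"
          using rr ord k' mult_right_mono[of "real M * real N * um \<tau>" "a \<tau>" "U K' \<tau> (Rho i')"] by auto
        have ca: "continuous (at \<tau> within {0..T}) a"
        proof -
          have "\<forall>L\<in>?C. continuous (at \<tau> within {0..T}) (\<lambda>s. vnorm ns N (U L s))"
            using gt state_cont(1)[OF cUwS[OF _ tauT order_refl] _ species cv_pos r_pos] unfolding good_def by blast
          then have "continuous (at \<tau> within {0..T}) um" unfolding um_def
            by (intro cont_Max finC neC)
          then show ?thesis unfolding a_def by (intro continuous_intros)
        qed
        have dA: "(A has_real_derivative a \<tau>) (at \<tau> within {0..T})"
          using integral_has_vector_derivative_continuous_at[OF a_int, of \<tau> "{}"] tauT ca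
          unfolding A_def has_real_derivative_iff_has_vector_derivative by simp
        have dE: "((\<lambda>t. exp (A t + t)) has_real_derivative e * (a \<tau> + 1)) (at \<tau> within {0..T})"
          unfolding e_def by (auto intro!: derivative_eq_intros dA)
        have dR: "((\<lambda>t. U K' t (Rho i')) has_real_derivative fv_rhs ns r e0 cv N M (\<lambda>L. U L \<tau>) K' (Rho i'))
            (at \<tau> within {0..T})" by (rule dU[OF k'(2) tauT RhoC[OF k'(3)]])
        have dh: "(h k has_real_derivative
           fv_rhs ns r e0 cv N M (\<lambda>L. U L \<tau>) K' (Rho i') * e + e * (a \<tau> + 1) * U K' \<tau> (Rho i'))
           (at \<tau> within {0..T})"
          using DERIV_mult[OF dR dE] unfolding h_def k'(1) e_def by simp
        have pos: "U K' \<tau> (Rho i') > 0" using gt k' unfolding good_def by auto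
        have "e * U K' \<tau> (Rho i') = (-(a \<tau>) * U K' \<tau> (Rho i')) * e + e * (a \<tau> + 1) * U K' \<tau> (Rho i')"
          by (simp add: algebra_simps)
        also have "\<dots> \<le> fv_rhs ns r e0 cv N M (\<lambda>L. U L \<tau>) K' (Rho i') * e + e * (a \<tau> + 1) * U K' \<tau> (Rho i')"
          using mult_right_mono[OF rr2, of e] e by simp
        finally have Dpos: "fv_rhs ns r e0 cv N M (\<lambda>L. U L \<tau>) K' (Rho i') * e + e * (a \<tau> + 1) * U K' \<tau> (Rho i') > 0"
          using e pos by (smt (verit) mult_pos_pos)
        show "\<exists>D>0. (h k has_real_derivative D) (at \<tau> within {0..t0})"
          using Dpos DERIV_subset[OF dh sub] by blast
      qed
      then have "h (K, i) t0 > l1" using K i t0 by auto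
      then have "U K t0 (Rho i) * exp (A t0 + t0) > l1" unfolding h_def by simp
      then have "U K t0 (Rho i) * exp (A t0 + t0) * exp (-(A t0 + t0)) > l1 * exp (-(A t0 + t0))"
        by (intro mult_strict_right_mono) simp_all
      then have "U K t0 (Rho i) > l1 * exp (-(A t0 + t0))"
        by (simp add: mult.assoc exp_add[symmetric])
      moreover have "l1 * exp (-(Atot + T)) \<le> l1 * exp (-(A t0 + t0))"
        using A_le[OF t0(1)] t0 l1 by simp
      ultimately show ?thesis unfolding rm_def by simp
    qed
    have subf: "{0..tf} \<subseteq> {0..T}" using tfT' by auto
    have pos1: "U K t (Rho i) > 0" if t: "t \<in> {0..tf}" and K: "K \<in> ?C" and i: "i < ns" for t K i
    proof (cases "t < tf")
      case True
      then show ?thesis using before[of t] t tfT' K i unfolding good_def by auto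
    next
      case False
      then have ttf: "t = tf" using t by auto
      have "continuous_on (closure {0..<tf}) (\<lambda>t. U K t (Rho i))"
        using tfpos cU[OF K RhoC[OF i]] subf by (auto intro: continuous_on_subset)
      moreover have "tf \<in> closure {0..<tf}" using tfpos by simp
      ultimately have "U K tf (Rho i) \<ge> rm"
        by (rule continuous_ge_on_closure) (use low[OF _ _ K i] tfT' in auto)
      then show ?thesis using rm ttf by simp
    qed
    define Phi where "Phi t = (\<Sum>K\<in>?C. \<bar>LamK ns r e0 cv N M (\<lambda>L. U L t) K\<bar>)" for t
    have cPhi: "continuous_on {0..tf} Phi"
      unfolding continuous_on_eq_continuous_within
    proof
      fix t assume t: "t \<in> {0..tf}"
      have sc: "continuous (at t within {0..tf}) (\<lambda>s. vnorm ns N (U L s))"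
        "continuous (at t within {0..tf}) (\<lambda>s. c_mix ns r e0 cv N (U L s))" if L: "L \<in> ?C" for L
        using state_cont[OF cUwS[OF L t subf] _ species cv_pos r_pos] pos1[OF t L] by auto
      show "continuous (at t within {0..tf}) Phi" unfolding Phi_def LamK_def lamKL_def
        using sc nbr_cells[OF _ _ mesh] by (intro continuous_intros) auto
    qed
    obtain tm where tm: "tm \<in> {0..tf}" "\<forall>t\<in>{0..tf}. Phi t \<le> Phi tm"
      using continuous_attains_sup[OF compact_Icc _ cPhi] tfpos by auto
    define CP where "CP = Phi tm"
    have Lam_le: "LamK ns r e0 cv N M (\<lambda>L. U L t) K \<le> CP" if "t \<in> {0..tf}" "K \<in> ?C" for t K
    proof -
      have "\<bar>LamK ns r e0 cv N M (\<lambda>L. U L t) K\<bar> \<le> Phi t"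
        unfolding Phi_def using finC that by (intro member_le_sum) auto
      then show ?thesis using tm that unfolding CP_def by fastforce
    qed
    have CP0: "CP \<ge> 0" unfolding CP_def Phi_def by (simp add: sum_nonneg)
    define \<beta> where "\<beta> = real M / 2 * CP + 1"
    obtain l2 where l2: "l2 > 0" "\<forall>K\<in>?C. gth ns e0 N (U K 0) > l2"
      using finite_pos_lb[of ?C "\<lambda>K. gth ns e0 N (U K 0)"] finC good0 unfolding good_def by auto
    define h where "h K t = gth ns e0 N (U K t) * exp (\<beta> * t)" for K t
    have "\<forall>K\<in>?C. \<forall>t\<in>{0..tf}. h K t > l2"
    proof (rule barrier)
      show "finite ?C" by (rule finC)
      show "0 \<le> tf" using tfpos by simp
      show "\<forall>K\<in>?C. continuous_on {0..tf} (h K)"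
      proof
        fix K assume K: "K \<in> ?C"
        have "continuous_on {0..tf} (\<lambda>t. gth ns e0 N (U K t))"
          unfolding continuous_on_eq_continuous_within
          using state_cont(2)[OF cUwS[OF K _ subf] _ species cv_pos r_pos] pos1 K by auto
        then show "continuous_on {0..tf} (h K)" unfolding h_def by (intro continuous_intros)
      qed
      show "\<forall>K\<in>?C. h K 0 > l2" using l2 unfolding h_def by auto
    next
      fix \<tau> K assume tau: "\<tau> \<in> {0<..tf}" and K: "K \<in> ?C" and hk: "h K \<tau> = l2"
        and allge: "\<forall>j\<in>?C. \<forall>s\<in>{0..\<tau>}. h j s \<ge> l2"
      have tauf: "\<tau> \<in> {0..tf}" using tau by auto
      have tauT: "\<tau> \<in> {0..T}" using tauf subf by auto
      define e where "e = exp (\<beta> * \<tau>)"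
      have e: "e > 0" unfolding e_def by simp
      have gL: "gth ns e0 N (U L \<tau>) > 0" if L: "L \<in> ?C" for L
      proof -
        have "gth ns e0 N (U L \<tau>) * e \<ge> l2" using allge L tau unfolding h_def e_def by auto
        then have "gth ns e0 N (U L \<tau>) * e > 0" using l2 by linarith
        then show ?thesis using e by (simp add: zero_less_mult_iff)
      qed
      have adm: "\<forall>L\<in>?C. (\<forall>i<ns. (\<lambda>L. U L \<tau>) L (Rho i) > 0) \<and> gth ns e0 N ((\<lambda>L. U L \<tau>) L) > 0"
        using pos1[OF tauf] gL by auto
      have gr: "ell ns e0 N (U K \<tau>) (\<lambda>c. fv_rhs ns r e0 cv N M (\<lambda>L. U L \<tau>) K c)
          \<ge> -(real M / 2) * LamK ns r e0 cv N M (\<lambda>L. U L \<tau>) K * gth ns e0 N (U K \<tau>)"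
        using g_rhs_ge[OF dim(1) mesh K species r_pos cv_pos adm] by simp
      have "real M / 2 * LamK ns r e0 cv N M (\<lambda>L. U L \<tau>) K * gth ns e0 N (U K \<tau>)
          \<le> real M / 2 * CP * gth ns e0 N (U K \<tau>)"
        using Lam_le[OF tauf K] gL[OF K] by (intro mult_right_mono mult_left_mono) auto
      then have gr2: "ell ns e0 N (U K \<tau>) (\<lambda>c. fv_rhs ns r e0 cv N M (\<lambda>L. U L \<tau>) K c)
          \<ge> -(real M / 2 * CP * gth ns e0 N (U K \<tau>))" using gr by simp
      have dg: "((\<lambda>t. gth ns e0 N (U K t)) has_real_derivative
          ell ns e0 N (U K \<tau>) (\<lambda>c. fv_rhs ns r e0 cv N M (\<lambda>L. U L \<tau>) K c)) (at \<tau> within {0..T})"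
      proof (rule gth_deriv)
        have "dens ns (U K \<tau>) > 0" using dens_pos[OF species] pos1[OF tauf K] by auto
        then show "dens ns (U K \<tau>) \<noteq> 0" by simp
      qed (use dU[OF K tauT] in auto)
      have dE: "((\<lambda>t. exp (\<beta> * t)) has_real_derivative e * \<beta>) (at \<tau> within {0..T})"
        unfolding e_def by (auto intro!: derivative_eq_intros)
      define g' where "g' = ell ns e0 N (U K \<tau>) (\<lambda>c. fv_rhs ns r e0 cv N M (\<lambda>L. U L \<tau>) K c)"
      have dh: "(h K has_real_derivative g' * e + e * \<beta> * gth ns e0 N (U K \<tau>)) (at \<tau> within {0..T})"
        using DERIV_mult[OF dg dE] unfolding h_def[abs_def] g'_def e_def by simp
      have "e * gth ns e0 N (U K \<tau>) = (-(real M / 2 * CP * gth ns e0 N (U K \<tau>))) * e + e * \<beta> * gth ns e0 N (U K \<tau>)"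
        unfolding \<beta>_def by (simp add: algebra_simps)
      also have "\<dots> \<le> g' * e + e * \<beta> * gth ns e0 N (U K \<tau>)"
        using mult_right_mono[OF gr2, of e] e unfolding g'_def by simp
      finally have Dpos: "g' * e + e * \<beta> * gth ns e0 N (U K \<tau>) > 0"
        using e gL[OF K] by (smt (verit) mult_pos_pos)
      show "\<exists>D>0. (h K has_real_derivative D) (at \<tau> within {0..tf})"
        using Dpos DERIV_subset[OF dh subf] by blast
    qed
    then have "good tf" unfolding good_def
    proof (intro ballI conjI allI impI)
      fix K i assume K: "K \<in> ?C" show "i < ns \<Longrightarrow> U K tf (Rho i) > 0" using pos1[OF _ K] tfpos by auto
    next
      fix K assume hh: "\<forall>K\<in>?C. \<forall>t\<in>{0..tf}. h K t > l2" and K: "K \<in> ?C"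
      have "gth ns e0 N (U K tf) * exp (\<beta> * tf) > l2" using hh K tfpos unfolding h_def by auto
      then have "gth ns e0 N (U K tf) * exp (\<beta> * tf) > 0" using l2 by linarith
      then show "gth ns e0 N (U K tf) > 0" by (simp add: zero_less_mult_iff)
    qed
    then show False using notF tfF by blast
  qed
  show ?thesis
  proof (intro ballI conjI)
    fix K t assume K: "K \<in> ?C" and t: "t \<in> {0..T}"
    have p: "\<forall>i<ns. U K t (Rho i) > 0" "gth ns e0 N (U K t) > 0" using main t K unfolding good_def by auto
    have Cv: "(\<Sum>i<ns. U K t (Rho i) * cv i) > 0" using wsum_pos[OF species p(1) cv_pos] .
    have R: "(\<Sum>i<ns. U K t (Rho i) * r i) > 0" using wsum_pos[OF species p(1) r_pos] .
    show tp: "temp ns e0 cv N (U K t) > 0" unfolding temp_gth using Cv p(2) by simp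
    show "pres ns r e0 cv N (U K t) > 0" unfolding pres_def using R tp by simp
  qed
qed

end
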